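(* Let $\mathcal U$ be a finite set of size $n$, $\Pi$ an orthogonal projector on $L_2(\mathcal U)$, and $\mathcal D$ a finitely supported probability distribution over $L_2(\mathcal U)$. For $u\in\mathcal U$ let $\delta_u$ be the function with $\delta_u(u)=n$ and $\delta_u(v)=0$ for $v\neq u$. Then $$\mathbb{E}_{f\sim\mathcal D}\|\Pi f\|_4^4\le\left(\mathbb{E}_{f,f'\sim\mathcal D}\langle f,\Pi f'\rangle^4\right)^{1/2}\left(\mathbb{E}_{u\in\mathcal U}\|\Pi\delta_u\|_4^4\right)^{1/2},$$ where $f,f'$ are independent samples from $\mathcal D$ and $u$ is uniform on $\mathcal U$.
   Context: $L_2(\mathcal U)$ is the space of functions $\mathcal U\to\mathbb{R}$ with the uniform (expectation) measure: $\langle f,g\rangle=\mathbb{E}_{u\in\mathcal U}f(u)g(u)$, $\|f\|_p=(\mathbb{E}_{u}|f(u)|^p)^{1/p}$; orthogonality refers to this inner product. *)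

theory Defs
  imports "HOL-Probability.Probability"
begin

definition L2_inner :: "('u::finite \<Rightarrow> real) \<Rightarrow> ('u \<Rightarrow> real) \<Rightarrow> real" where
  "L2_inner f g = (\<Sum>u\<in>UNIV. f u * g u) / real CARD('u)"

definition L4_norm_pow4 :: "('u::finite \<Rightarrow> real) \<Rightarrow> real" where
  "L4_norm_pow4 f = (\<Sum>u\<in>UNIV. \<bar>f u\<bar> ^ 4) / real CARD('u)"

definition orth_projector :: "(('u::finite \<Rightarrow> real) \<Rightarrow> ('u \<Rightarrow> real)) \<Rightarrow> bool" where
  "orth_projector P \<longleftrightarrow>
     (\<forall>f g. P (\<lambda>u. f u + g u) = (\<lambda>u. P f u + P g u)) \<and>
     (\<forall>c f. P (\<lambda>u. c * f u) = (\<lambda>u. c * P f u)) \<and>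
     (\<forall>f. P (P f) = P f) \<and>
     (\<forall>f g. L2_inner (P f) g = L2_inner f (P g))"

definition delta_fn :: "'u::finite \<Rightarrow> 'u \<Rightarrow> real" where
  "delta_fn u = (\<lambda>v. if v = u then real CARD('u) else 0)"

end

theory Submission imports Defs "HOL-Analysis.Convex" begin

definition t2 :: "('a \<Rightarrow> real) \<Rightarrow> 'a \<times> 'a \<Rightarrow> real" where
  "t2 p z = p (fst z) * p (snd z)"

lemma sq_sum_t2:
  fixes p q :: "'a::finite \<Rightarrow> real"
  shows "(\<Sum>v\<in>UNIV. p v * q v)^2 = (\<Sum>z\<in>UNIV. t2 p z * t2 q z)"
proof -
  have "(\<Sum>v\<in>UNIV. p v * q v)^2 = (\<Sum>x\<in>UNIV. \<Sum>y\<in>UNIV. (p x * q x) * (p y * q y))"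
    by (simp add: power2_eq_square sum_product)
  also have "\<dots> = (\<Sum>z\<in>UNIV \<times> UNIV. (p (fst z) * q (fst z)) * (p (snd z) * q (snd z)))"
    by (simp add: sum.cartesian_product case_prod_beta)
  also have "\<dots> = (\<Sum>z\<in>UNIV. t2 p z * t2 q z)"
    by (simp add: t2_def mult_ac)
  finally show ?thesis .
qed

lemma pow4_sum:
  fixes p q :: "'a::finite \<Rightarrow> real"
  shows "(\<Sum>v\<in>UNIV. p v * q v)^4 = (\<Sum>w\<in>UNIV. t2 (t2 p) w * t2 (t2 q) w)"
proof -
  have "(\<Sum>v\<in>UNIV. p v * q v)^4 = ((\<Sum>v\<in>UNIV. p v * q v)^2)^2" by simp
  also have "\<dots> = (\<Sum>w\<in>UNIV. t2 (t2 p) w * t2 (t2 q) w)"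
    by (simp only: sq_sum_t2)
  finally show ?thesis .
qed

lemma sq_expand:
  fixes x :: "'a \<Rightarrow> real"
  shows "(\<Sum>i\<in>A. x i)^2 = (\<Sum>i\<in>A. \<Sum>j\<in>A. x i * x j)"
  by (simp add: power2_eq_square sum_product)


theorem lemma4p6:
  fixes P :: "('u::finite \<Rightarrow> real) \<Rightarrow> ('u \<Rightarrow> real)"
    and D :: "('u \<Rightarrow> real) pmf"
  assumes "orth_projector P"
    and "finite (set_pmf D)"
  shows "measure_pmf.expectation D (\<lambda>f. L4_norm_pow4 (P f))
    \<le> sqrt (measure_pmf.expectation D (\<lambda>f. measure_pmf.expectation D (\<lambda>f'. (L2_inner f (P f')) ^ 4)))
      * sqrt ((\<Sum>u\<in>UNIV. L4_norm_pow4 (P (delta_fn u))) / real CARD('u))"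
proof -
  define S where "S = set_pmf D"
  define N where "N = real CARD('u)"
  define W where "W = pmf D"
  define g where "g u = P (delta_fn u)" for u
  have finS: "finite S" using assms(2) S_def by simp
  have Npos: "N > 0" unfolding N_def by simp
  have E: "measure_pmf.expectation D X = (\<Sum>f\<in>S. W f * X f)" for X :: "('u \<Rightarrow> real) \<Rightarrow> real"
    unfolding S_def W_def
    by (subst integral_measure_pmf_real[OF assms(2)]) (auto simp: mult.commute)
  have sa: "L2_inner (P f) h = L2_inner f (P h)" for f h
    using assms(1) unfolding orth_projector_def by blast
  have idem: "P (P f) = P f" for f
    using assms(1) unfolding orth_projector_def by blast
  have F1: "L2_inner h (delta_fn u) = h u" for h :: "'u \<Rightarrow> real" and u
  proof -
    have "(\<Sum>v\<in>UNIV. h v * delta_fn u v) = (\<Sum>v\<in>UNIV. if v = u then h u * N else 0)"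
      by (rule sum.cong) (auto simp: delta_fn_def N_def)
    also have "\<dots> = h u * N" by simp
    finally show ?thesis using Npos unfolding L2_inner_def N_def by simp
  qed
  have F3: "L2_inner (P f) (P f') = L2_inner f (P f')" for f f'
    using sa[of f "P f'"] idem by simp
  have F2: "P f u = L2_inner (P f) (g u)" for f u
    using F1[of "P f" u] sa[of "P f" "delta_fn u"] idem unfolding g_def by simp
  have F4: "L2_inner (g u) (g u') = g u' u" for u u'
  proof -
    have "L2_inner (g u) (g u') = L2_inner (delta_fn u) (g u')"
      using F3[of "delta_fn u" "delta_fn u'"] unfolding g_def .
    also have "\<dots> = L2_inner (g u') (delta_fn u)"
      unfolding L2_inner_def by (simp add: mult.commute)
    also have "\<dots> = g u' u" by (rule F1)
    finally show ?thesis .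
  qed
  define A where "A f = t2 (t2 (P f))" for f
  define B where "B u = t2 (t2 (g u))" for u
  define T where "T w = (\<Sum>f\<in>S. W f * A f w)" for w
  define G where "G w = (\<Sum>u\<in>UNIV. B u w) / N" for w
  have inner4: "(L2_inner p q)^4 = (\<Sum>w\<in>UNIV. t2 (t2 p) w * t2 (t2 q) w) / N^4" for p q :: "'u \<Rightarrow> real"
    unfolding L2_inner_def N_def[symmetric] by (simp add: power_divide pow4_sum)
  have L: "measure_pmf.expectation D (\<lambda>f. L4_norm_pow4 (P f)) = (\<Sum>w\<in>UNIV. T w * G w) / N^4"
  proof -
    have "measure_pmf.expectation D (\<lambda>f. L4_norm_pow4 (P f))
        = (\<Sum>f\<in>S. W f * ((\<Sum>u\<in>UNIV. (P f u)^4) / N))"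
      unfolding E L4_norm_pow4_def N_def by simp
    also have "\<dots> = (\<Sum>f\<in>S. \<Sum>u\<in>UNIV. \<Sum>w\<in>UNIV. W f * A f w * B u w) / (N * N^4)"
    proof -
      have "(P f u)^4 = (\<Sum>w\<in>UNIV. A f w * B u w) / N^4" for f u
        using F2[of f u] inner4 unfolding A_def B_def by simp
      then show ?thesis
        by (simp add: sum_divide_distrib sum_distrib_left mult_ac)
    qed
    also have "\<dots> = (\<Sum>w\<in>UNIV. T w * G w) / N^4"
    proof -
      have "(\<Sum>w\<in>UNIV. T w * G w) = (\<Sum>w\<in>UNIV. \<Sum>f\<in>S. \<Sum>u\<in>UNIV. W f * A f w * B u w) / N"
        proof -
        have "T w * G w = (\<Sum>f\<in>S. \<Sum>u\<in>UNIV. W f * A f w * B u w) / N" for w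
        proof -
          have "T w * (\<Sum>u\<in>UNIV. B u w) = (\<Sum>f\<in>S. \<Sum>u\<in>UNIV. W f * A f w * B u w)"
            unfolding T_def sum_product ..
          then show ?thesis unfolding G_def by simp
        qed
        then show ?thesis by (simp add: sum_divide_distrib)
      qed
      also have "\<dots> = (\<Sum>f\<in>S. \<Sum>u\<in>UNIV. \<Sum>w\<in>UNIV. W f * A f w * B u w) / N"
        by (rule arg_cong[where f="\<lambda>x. x / N"], subst sum.swap, rule sum.cong[OF refl], rule sum.swap)
      finally show ?thesis using Npos by (simp add: power_Suc)
    qed
    finally show ?thesis .
  qed
  have X: "measure_pmf.expectation D (\<lambda>f. measure_pmf.expectation D (\<lambda>f'. (L2_inner f (P f')) ^ 4))
      = (\<Sum>w\<in>UNIV. (T w)^2) / N^4"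
  proof -
    have "measure_pmf.expectation D (\<lambda>f. measure_pmf.expectation D (\<lambda>f'. (L2_inner f (P f')) ^ 4))
        = (\<Sum>f\<in>S. W f * (\<Sum>f'\<in>S. W f' * ((\<Sum>w\<in>UNIV. A f w * A f' w) / N^4)))"
    proof -
      have "(L2_inner f (P f'))^4 = (\<Sum>w\<in>UNIV. A f w * A f' w) / N^4" for f f'
        using F3[of f f'] inner4[of "P f" "P f'"] unfolding A_def by simp
      then show ?thesis unfolding E by simp
    qed
    also have "\<dots> = (\<Sum>f\<in>S. \<Sum>f'\<in>S. \<Sum>w\<in>UNIV. (W f * A f w) * (W f' * A f' w)) / N^4"
      by (simp add: sum_divide_distrib sum_distrib_left mult_ac)
    also have "\<dots> = (\<Sum>w\<in>UNIV. (T w)^2) / N^4"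
    proof -
      have "(\<Sum>w\<in>UNIV. (T w)^2) = (\<Sum>w\<in>UNIV. \<Sum>f\<in>S. \<Sum>f'\<in>S. (W f * A f w) * (W f' * A f' w))"
        unfolding T_def sq_expand ..
      also have "\<dots> = (\<Sum>f\<in>S. \<Sum>f'\<in>S. \<Sum>w\<in>UNIV. (W f * A f w) * (W f' * A f' w))"
        by (subst sum.swap, rule sum.cong[OF refl], rule sum.swap)
      finally show ?thesis by simp
    qed
    finally show ?thesis .
  qed
  have Y: "(\<Sum>u\<in>UNIV. L4_norm_pow4 (P (delta_fn u))) / real CARD('u) = (\<Sum>w\<in>UNIV. (G w)^2) / N^4"
  proof -
    have "(\<Sum>w\<in>UNIV. (G w)^2) = (\<Sum>w\<in>UNIV. \<Sum>u\<in>UNIV. \<Sum>u'\<in>UNIV. B u w * B u' w) / N^2"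
    proof -
      have "(G w)^2 = (\<Sum>u\<in>UNIV. \<Sum>u'\<in>UNIV. B u w * B u' w) / N^2" for w
        unfolding G_def power_divide sq_expand ..
      then show ?thesis by (simp add: sum_divide_distrib)
    qed
    also have "\<dots> = (\<Sum>u\<in>UNIV. \<Sum>u'\<in>UNIV. \<Sum>w\<in>UNIV. B u w * B u' w) / N^2"
      by (rule arg_cong[where f="\<lambda>x. x / N^2"], subst sum.swap, rule sum.cong[OF refl], rule sum.swap)
    also have "\<dots> = (\<Sum>u\<in>UNIV. \<Sum>u'\<in>UNIV. N^4 * (g u' u)^4) / N^2"
    proof -
      have "(\<Sum>w\<in>UNIV. B u w * B u' w) = N^4 * (g u' u)^4" for u u'
        using inner4[of "g u" "g u'"] F4[of u u'] Npos unfolding B_def by simp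
      then show ?thesis by simp
    qed
    also have "\<dots> = N^4 * ((\<Sum>u'\<in>UNIV. \<Sum>u\<in>UNIV. (g u' u)^4) / N^2)"
      by (subst sum.swap) (simp only: sum_distrib_left[symmetric] times_divide_eq_right)
    also have "\<dots> = N^4 * ((\<Sum>u\<in>UNIV. L4_norm_pow4 (P (delta_fn u))) / real CARD('u))"
      unfolding L4_norm_pow4_def g_def N_def by (simp add: sum_divide_distrib power2_eq_square)
    finally show ?thesis using Npos by simp
  qed
  have CS: "(\<Sum>w\<in>UNIV. T w * G w) \<le> sqrt ((\<Sum>w\<in>UNIV. (T w)^2) * (\<Sum>w\<in>UNIV. (G w)^2))"
    by (rule real_le_rsqrt) (rule Cauchy_Schwarz_ineq_sum)
  have N4: "N^4 = N^2 * N^2" by (simp add: power_add[symmetric])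
  have sq4: "sqrt (x / N^4) = sqrt x / N^2" for x
  proof -
    have "sqrt (N^4) = N^2" unfolding N4 by (simp add: real_sqrt_mult power2_eq_square)
    then show ?thesis by (simp add: real_sqrt_divide)
  qed
  have "(\<Sum>w\<in>UNIV. T w * G w) / N^4 \<le> sqrt ((\<Sum>w\<in>UNIV. (T w)^2) * (\<Sum>w\<in>UNIV. (G w)^2)) / N^4"
    using CS Npos by (simp add: divide_right_mono)
  also have "\<dots> = sqrt ((\<Sum>w\<in>UNIV. (T w)^2) / N^4) * sqrt ((\<Sum>w\<in>UNIV. (G w)^2) / N^4)"
    by (subst (1 2) sq4) (simp add: real_sqrt_mult)
  finally show ?thesis unfolding L X Y .
qed

end
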